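(* There is a universal constant $C>0$ such that, in the standing setting, for every $N\in\mathbb{N}$ and $\varepsilon>0$, $$\mathcal{H}^{\rm int}(\varepsilon,R_N[B_{\mathcal{H}_K}],C(\Omega))\ge\sup\Big\{\tfrac12\mathcal{E}(\delta,\{\lambda_i\}_{i=1}^N)-C\ln\tfrac1D\ :\ D>0,\ \delta>0,\ \big(\nu(\Omega)^{1/2}N^{1/2}\varepsilon+\sigma_1D^{1/2}\big)^2\le\sum_{i=1}^N\min\{\lambda_i,\delta\}\Big\},$$ where $\sigma_1=\sqrt{\lambda_1}$.
   Context: Standing setting: $\Omega\subseteq\mathbb{R}^n$ compact, $\nu$ a finite Borel measure on $\Omega$ (total mass $\nu(\Omega)$), $K:\Omega\times\Omega\to\mathbb{R}$ continuous, symmetric, positive semidefinite; $O_K[\phi](x)=\int_\Omega K(x,y)\phi(y)\,d\nu(y)$ on $L_2(\nu)$, with an orthonormal basis $\{\phi_i\}$ of $L_2(\nu)$ of continuous eigenfunctions, $O_K\phi_i=\lambda_i\phi_i$, $\lambda_1\ge\lambda_2\ge\dots>0$, $K(x,y)=\sum_i\lambda_i\phi_i(x)\phi_i(y)$ uniformly. $\mathcal{H}_K$ is the RKHS of $K$, equal to $\{\sum a_i\phi_i:\sum a_i^2/\lambda_i<\infty\}$ with $\langle\sum a_i\phi_i,\sum b_i\phi_i\rangle_{\mathcal{H}_K}=\sum a_ib_i/\lambda_i$; $B_X$ is the open unit ball of $X$; $C(\Omega)$ has the sup norm. $R_N[f]=\sum_{i=1}^N\langle f,\phi_i\rangle_{L_2(\nu)}\phi_i$,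 $R_N[B_{\mathcal{H}_K}]=\{R_N[f]:f\in B_{\mathcal{H}_K}\}$. $\mathcal{H}^{\rm int}(\varepsilon,A,X)$ is the natural log of the minimal cardinality of $C\subseteq A$ with $A\subseteq\bigcup_{c\in C}(c+\varepsilon B_X)$. $\mathcal{E}(\delta,\{\lambda_i\}_{i=1}^N)=\sum_{i\le N,\lambda_i>\delta}\ln(\lambda_i/\delta)$. *)

theory Defs
  imports "HOL-Analysis.Analysis"
begin

text \<open>Points of R^n are encoded as functions nat => real vanishing at all indices >= n,
  so that a single constant can be quantified uniformly over all dimensions n.
  On this subspace the product topology of nat => real is the Euclidean topology.\<close>

definition euclid_n :: "nat \<Rightarrow> (nat \<Rightarrow> real) set" where
  "euclid_n n = {x. \<forall>i\<ge>n. x i = 0}"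

text \<open>Standing setting. Indices are shifted: phi 0, lam 0 correspond to phi_1, lambda_1.\<close>

definition standing_setting ::
  "nat \<Rightarrow> (nat \<Rightarrow> real) set \<Rightarrow> (nat \<Rightarrow> real) measure \<Rightarrow>
   ((nat \<Rightarrow> real) \<Rightarrow> (nat \<Rightarrow> real) \<Rightarrow> real) \<Rightarrow>
   (nat \<Rightarrow> (nat \<Rightarrow> real) \<Rightarrow> real) \<Rightarrow> (nat \<Rightarrow> real) \<Rightarrow> bool" where
  "standing_setting n \<Omega> \<nu> K \<phi> lam \<longleftrightarrow>
     \<Omega> \<subseteq> euclid_n n \<and> compact \<Omega> \<and>
     sets \<nu> = sets (restrict_space borel \<Omega>) \<and> finite_measure \<nu> \<and>
     continuous_on (\<Omega> \<times> \<Omega>) (\<lambda>(x, y). K x y) \<and>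
     (\<forall>x\<in>\<Omega>. \<forall>y\<in>\<Omega>. K x y = K y x) \<and>
     (\<forall>(m::nat) (xs::nat \<Rightarrow> nat \<Rightarrow> real) (c::nat \<Rightarrow> real).
        (\<forall>i<m. xs i \<in> \<Omega>) \<longrightarrow> 0 \<le> (\<Sum>i<m. \<Sum>j<m. c i * c j * K (xs i) (xs j))) \<and>
     \<comment> \<open>continuous eigenfunctions forming an orthonormal basis of L2(nu)\<close>
     (\<forall>i. continuous_on \<Omega> (\<phi> i) \<and> \<phi> i \<in> borel_measurable \<nu> \<and>
          integrable \<nu> (\<lambda>x. (\<phi> i x)\<^sup>2)) \<and>
     (\<forall>i j. (LINT x|\<nu>. \<phi> i x * \<phi> j x) = (if i = j then 1 else 0)) \<and>
     (\<forall>f. f \<in> borel_measurable \<nu> \<and> integrable \<nu> (\<lambda>x. (f x)\<^sup>2) \<and>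
          (\<forall>i. (LINT x|\<nu>. f x * \<phi> i x) = 0) \<longrightarrow> (AE x in \<nu>. f x = 0)) \<and>
     \<comment> \<open>O_K phi_i = lambda_i phi_i in L2(nu)\<close>
     (\<forall>i. AE x in \<nu>. (LINT y|\<nu>. K x y * \<phi> i y) = lam i * \<phi> i x) \<and>
     (\<forall>i j. i \<le> j \<longrightarrow> lam j \<le> lam i) \<and> (\<forall>i. 0 < lam i) \<and>
     \<comment> \<open>Mercer expansion, uniformly on Omega x Omega\<close>
     uniform_limit (\<Omega> \<times> \<Omega>) (\<lambda>m (x, y). \<Sum>i<m. lam i * \<phi> i x * \<phi> i y)
        (\<lambda>(x, y). K x y) sequentially"

definition rkhs_ball :: "(nat \<Rightarrow> (nat \<Rightarrow> real) \<Rightarrow> real) \<Rightarrow> (nat \<Rightarrow> real) \<Rightarrow>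
    ((nat \<Rightarrow> real) \<Rightarrow> real) set" where
  "rkhs_ball \<phi> lam = {f. \<exists>a. summable (\<lambda>i. (a i)\<^sup>2 / lam i) \<and>
       (\<Sum>i. (a i)\<^sup>2 / lam i) < 1 \<and> f = (\<lambda>x. \<Sum>i. a i * \<phi> i x)}"

definition proj_N :: "(nat \<Rightarrow> real) measure \<Rightarrow> (nat \<Rightarrow> (nat \<Rightarrow> real) \<Rightarrow> real) \<Rightarrow> nat \<Rightarrow>
    ((nat \<Rightarrow> real) \<Rightarrow> real) \<Rightarrow> ((nat \<Rightarrow> real) \<Rightarrow> real)" where
  "proj_N \<nu> \<phi> N f = (\<lambda>x. \<Sum>i<N. (LINT y|\<nu>. f y * \<phi> i y) * \<phi> i x)"

definition sup_cover :: "'a set \<Rightarrow> real \<Rightarrow> ('a \<Rightarrow> real) set \<Rightarrow> ('a \<Rightarrow> real) set \<Rightarrow> bool" where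
  "sup_cover \<Omega> \<epsilon> A C \<longleftrightarrow> C \<subseteq> A \<and>
     A \<subseteq> (\<Union>c\<in>C. {f. (SUP x\<in>\<Omega>. \<bar>f x - c x\<bar>) < \<epsilon>})"

definition int_entropy :: "real \<Rightarrow> ('a \<Rightarrow> real) set \<Rightarrow> 'a set \<Rightarrow> ereal" where
  "int_entropy \<epsilon> A \<Omega> =
     (if \<exists>C. finite C \<and> sup_cover \<Omega> \<epsilon> A C
      then ereal (ln (real (LEAST n. \<exists>C. finite C \<and> sup_cover \<Omega> \<epsilon> A C \<and> card C = n)))
      else \<infinity>)"

definition eig_entropy :: "real \<Rightarrow> (nat \<Rightarrow> real) \<Rightarrow> nat \<Rightarrow> real" where
  "eig_entropy \<delta> lam N = (\<Sum>i\<in>{i. i < N \<and> lam i > \<delta>}. ln (lam i / \<delta>))"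

end

theory Submission
  imports Defs
begin


lemma lborel_affine_preimage:
  fixes s u :: real assumes s: "s > 0" and A: "A \<in> sets borel"
  shows "emeasure lborel ((\<lambda>x. u + s * x) -` A) = ennreal (1/s) * emeasure lborel A"
proof -
  have "emeasure lborel A = emeasure (density (distr lborel borel (\<lambda>x. u + s * x)) (\<lambda>_. ennreal (abs s))) A"
    using lborel_real_affine[of s u] s by simp
  also have "\<dots> = ennreal s * emeasure lborel ((\<lambda>x. u + s * x) -` A)"
    using A s by (simp add: emeasure_density_const emeasure_distr)
  finally have "ennreal (1/s) * emeasure lborel A = ennreal (1/s) * ennreal s * emeasure lborel ((\<lambda>x. u + s * x) -` A)"
    by (simp add: mult.assoc)
  also have "ennreal (1/s) * ennreal s = 1" using s by (simp add: ennreal_mult[symmetric])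
  finally show ?thesis by simp
qed



lemma PiM_affine_preimage:
  fixes J :: "nat set" and s u :: "nat \<Rightarrow> real"
  assumes J: "finite J" and s: "\<And>i. i \<in> J \<Longrightarrow> s i > 0"
    and X: "X \<in> sets (PiM J (\<lambda>_. lborel))"
  shows "emeasure (PiM J (\<lambda>_. lborel)) ((\<lambda>a. \<lambda>i\<in>J. u i + s i * a i) -` X \<inter> space (PiM J (\<lambda>_. lborel)))
     = ennreal (\<Prod>i\<in>J. 1 / s i) * emeasure (PiM J (\<lambda>_. lborel)) X"
proof -
  let ?P = "PiM J (\<lambda>_. lborel :: real measure)"
  let ?T = "\<lambda>a. \<lambda>i\<in>J. u i + s i * a i"
  interpret product_sigma_finite "\<lambda>_. lborel :: real measure"
    by (intro product_sigma_finite.intro) (rule lborel.sigma_finite_measure_axioms)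
  have Tm: "?T \<in> measurable ?P ?P"
    by (intro measurable_restrict) measurable
  let ?Q = "distr ?P ?P ?T"
  let ?Q' = "density ?Q (\<lambda>_. ennreal (\<Prod>i\<in>J. s i))"
  have sprod: "(\<Prod>i\<in>J. s i) > 0" using s by (simp add: prod_pos)
  have "?Q' = ?P"
  proof (rule PiM_eqI[OF J])
    show "sets ?Q' = sets ?P" by simp
    fix A :: "nat \<Rightarrow> real set" assume A: "\<And>i. i \<in> J \<Longrightarrow> A i \<in> sets lborel"
    have box: "?T -` Pi\<^sub>E J A \<inter> space ?P = Pi\<^sub>E J (\<lambda>i. (\<lambda>x. u i + s i * x) -` A i)"
      by (auto simp: space_PiM PiE_iff)
    have Am: "Pi\<^sub>E J A \<in> sets ?P" using A J by (intro sets_PiM_I_finite) auto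
    have "emeasure ?Q' (Pi\<^sub>E J A) = ennreal (\<Prod>i\<in>J. s i) * emeasure ?P (Pi\<^sub>E J (\<lambda>i. (\<lambda>x. u i + s i * x) -` A i))"
      using Am Tm by (simp add: emeasure_density_const emeasure_distr box)
    also have "\<dots> = ennreal (\<Prod>i\<in>J. s i) * (\<Prod>i\<in>J. ennreal (1 / s i) * emeasure lborel (A i))"
    proof -
      have m: "\<And>i. i \<in> J \<Longrightarrow> (\<lambda>x. u i + s i * x) -` A i \<in> sets borel"
      proof -
        fix i assume "i \<in> J"
        have f: "(\<lambda>x. u i + s i * x) \<in> borel_measurable borel" by simp
        show "(\<lambda>x. u i + s i * x) -` A i \<in> sets borel"
          using measurable_sets[OF f, of "A i"] A[OF \<open>i \<in> J\<close>] by simp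
      qed
      have "\<And>i. i \<in> J \<Longrightarrow> emeasure lborel ((\<lambda>x. u i + s i * x) -` A i) = ennreal (1 / s i) * emeasure lborel (A i)"
        using A s by (intro lborel_affine_preimage) auto
      moreover have "emeasure ?P (Pi\<^sub>E J (\<lambda>i. (\<lambda>x. u i + s i * x) -` A i)) = (\<Prod>i\<in>J. emeasure lborel ((\<lambda>x. u i + s i * x) -` A i))"
        using m J by (intro emeasure_PiM) auto
      ultimately show ?thesis by (metis (no_types, lifting) prod.cong)
    qed
    also have "\<dots> = (\<Prod>i\<in>J. ennreal (s i) * (ennreal (1 / s i) * emeasure lborel (A i)))"
    proof -
      have "ennreal (prod s J) = (\<Prod>i\<in>J. ennreal (s i))" using s by (subst prod_ennreal) (auto simp: less_imp_le)
      then show ?thesis by (simp only: prod.distrib)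
    qed
    also have "\<dots> = (\<Prod>i\<in>J. emeasure lborel (A i))"
    proof (rule prod.cong[OF refl])
      fix i assume "i \<in> J"
      then have "ennreal (s i) * ennreal (1 / s i) = 1" using s[of i] ennreal_mult[of "s i" "1 / s i"] by simp
      then show "ennreal (s i) * (ennreal (1 / s i) * emeasure lborel (A i)) = emeasure lborel (A i)"
        by (simp add: mult.assoc[symmetric])
    qed
    finally show "emeasure ?Q' (Pi\<^sub>E J A) = (\<Prod>i\<in>J. emeasure lborel (A i))" .
  qed
  then have "emeasure ?P X = ennreal (\<Prod>i\<in>J. s i) * emeasure ?Q X"
  proof -
    have "emeasure ?P X = emeasure ?Q' X" using \<open>?Q' = ?P\<close> by simp
    also have "\<dots> = ennreal (\<Prod>i\<in>J. s i) * emeasure ?Q X"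
      using X by (intro emeasure_density_const) simp
    finally show ?thesis .
  qed
  then have "ennreal (\<Prod>i\<in>J. 1 / s i) * emeasure ?P X = ennreal (\<Prod>i\<in>J. 1 / s i) * ennreal (\<Prod>i\<in>J. s i) * emeasure ?Q X"
    by (simp add: mult.assoc)
  also have "ennreal (\<Prod>i\<in>J. 1 / s i) * ennreal (\<Prod>i\<in>J. s i) = 1"
  proof -
    have "(\<Prod>i\<in>J. 1 / s i) * (\<Prod>i\<in>J. s i) = 1"
      using s by (auto simp: prod.distrib[symmetric] intro!: prod.neutral dest: s)
    moreover have "(\<Prod>i\<in>J. 1 / s i) \<ge> 0" using s by (simp add: prod_nonneg less_imp_le)
    ultimately show ?thesis using ennreal_mult[of "(\<Prod>i\<in>J. 1 / s i)" "(\<Prod>i\<in>J. s i)"] sprod by simp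
  qed
  finally have "ennreal (\<Prod>i\<in>J. 1 / s i) * emeasure ?P X = emeasure ?Q X" by (simp only: mult_1)
  also have "\<dots> = emeasure ?P (?T -` X \<inter> space ?P)" by (rule emeasure_distr[OF Tm X])
  finally show ?thesis by simp
qed



lemma ellipsoid_cover:
  fixes J :: "nat set" and lam :: "nat \<Rightarrow> real" and t :: real and B :: "(nat \<Rightarrow> real) set"
  assumes J: "finite J" and lam: "\<And>i. i \<in> J \<Longrightarrow> lam i > 0" and t: "t > 0" and B: "finite B"
    and cov: "\<And>a. a \<in> (\<Pi>\<^sub>E i\<in>J. UNIV) \<Longrightarrow> (\<Sum>i\<in>J. (a i)\<^sup>2 / lam i) < 1 \<Longrightarrow> \<exists>b\<in>B. (\<Sum>i\<in>J. (a i - b i)\<^sup>2) < t"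
  shows "(\<Prod>i\<in>J. sqrt (lam i / t)) \<le> real (card B)"
proof -
  let ?P = "PiM J (\<lambda>_. lborel :: real measure)"
  interpret product_sigma_finite "\<lambda>_. lborel :: real measure"
    by (intro product_sigma_finite.intro) (rule lborel.sigma_finite_measure_axioms)
  have spP: "space ?P = (\<Pi>\<^sub>E i\<in>J. UNIV)" by (simp add: space_PiM)
  define E where "E = {a \<in> space ?P. (\<Sum>i\<in>J. (a i)\<^sup>2 / lam i) < 1}"
  define Ball where "Ball b = {a \<in> space ?P. (\<Sum>i\<in>J. (a i - b i)\<^sup>2) < t}" for b :: "nat \<Rightarrow> real"
  define s where "s i = sqrt (lam i / t)" for i
  have s_pos: "\<And>i. i \<in> J \<Longrightarrow> s i > 0" using lam t by (simp add: s_def)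
  have Em: "E \<in> sets ?P" unfolding E_def by measurable
  define c where "c = (\<Prod>i\<in>J. 1 / s i)"
  have c_pos: "c > 0" unfolding c_def using s_pos by (simp add: prod_pos)
  have Ball_eq: "Ball b = (\<lambda>a. \<lambda>i\<in>J. (- b i * s i) + s i * a i) -` E \<inter> space ?P" for b
  proof -
    have "(\<Sum>i\<in>J. ((- b i * s i) + s i * a i)\<^sup>2 / lam i) = (\<Sum>i\<in>J. (a i - b i)\<^sup>2) / t" for a
    proof -
      have "(\<Sum>i\<in>J. ((- b i * s i) + s i * a i)\<^sup>2 / lam i) = (\<Sum>i\<in>J. (a i - b i)\<^sup>2 / t)"
      proof (rule sum.cong[OF refl])
        fix i assume i: "i \<in> J"
        have "((- b i * s i) + s i * a i)\<^sup>2 = (s i)\<^sup>2 * (a i - b i)\<^sup>2" by (simp add: power2_eq_square algebra_simps)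
        also have "(s i)\<^sup>2 = lam i / t" unfolding s_def using lam[OF i] t by simp
        finally show "((- b i * s i) + s i * a i)\<^sup>2 / lam i = (a i - b i)\<^sup>2 / t" using lam[OF i] by simp
      qed
      then show ?thesis by (simp add: sum_divide_distrib)
    qed
    then show ?thesis unfolding Ball_def E_def using t
      by (auto simp: spP PiE_iff restrict_def extensional_def)
  qed
  have Ball_meas: "emeasure ?P (Ball b) = ennreal c * emeasure ?P E" for b
    unfolding Ball_eq c_def by (rule PiM_affine_preimage[OF J s_pos Em])
  have Bm: "Ball b \<in> sets ?P" for b unfolding Ball_def by measurable
  have sub: "E \<subseteq> (\<Union>b\<in>B. Ball b)"
  proof
    fix a assume "a \<in> E"
    then have "a \<in> (\<Pi>\<^sub>E i\<in>J. UNIV)" "(\<Sum>i\<in>J. (a i)\<^sup>2 / lam i) < 1" unfolding E_def spP by auto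
    from cov[OF this] obtain b where "b \<in> B" "(\<Sum>i\<in>J. (a i - b i)\<^sup>2) < t" by blast
    then show "a \<in> (\<Union>b\<in>B. Ball b)" using \<open>a \<in> E\<close> unfolding Ball_def E_def by auto
  qed
  have "emeasure ?P E \<le> emeasure ?P (\<Union>b\<in>B. Ball b)"
    by (rule emeasure_mono[OF sub]) (use Bm B in auto)
  also have "\<dots> \<le> (\<Sum>b\<in>B. emeasure ?P (Ball b))"
    by (rule emeasure_subadditive_finite[OF B]) (use Bm in auto)
  also have "\<dots> = of_nat (card B) * (ennreal c * emeasure ?P E)"
    by (simp add: Ball_meas)
  finally have ineq: "emeasure ?P E \<le> of_nat (card B) * (ennreal c * emeasure ?P E)" .
  define eta where "eta i = sqrt (lam i / (real (card J) + 1))" for i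
  have eta_pos: "\<And>i. i \<in> J \<Longrightarrow> eta i > 0" using lam by (simp add: eta_def)
  have box0: "(\<Pi>\<^sub>E i\<in>J. {- eta i<..<eta i}) \<subseteq> E"
  proof
    fix a assume a: "a \<in> (\<Pi>\<^sub>E i\<in>J. {- eta i<..<eta i})"
    have "(\<Sum>i\<in>J. (a i)\<^sup>2 / lam i) \<le> (\<Sum>i\<in>J. 1 / (real (card J) + 1))"
    proof (rule sum_mono)
      fix i assume i: "i \<in> J"
      then have "\<bar>a i\<bar> < eta i" using a by (auto simp: PiE_iff abs_less_iff)
      then have "(a i)\<^sup>2 < (eta i)\<^sup>2"
        by (metis abs_ge_zero power2_abs power_strict_mono zero_less_numeral)
      also have "(eta i)\<^sup>2 = lam i / (real (card J) + 1)" unfolding eta_def using lam[OF i] by simp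
      finally show "(a i)\<^sup>2 / lam i \<le> 1 / (real (card J) + 1)"
        using lam[OF i] by (simp add: divide_simps)
    qed
    also have "\<dots> < 1" by (simp add: divide_simps)
    finally show "a \<in> E" using a unfolding E_def spP by (auto simp: PiE_iff)
  qed
  have "emeasure ?P (\<Pi>\<^sub>E i\<in>J. {- eta i<..<eta i}) = (\<Prod>i\<in>J. emeasure lborel {- eta i<..<eta i})"
    using J by (intro emeasure_PiM) auto
  also have "\<dots> = (\<Prod>i\<in>J. ennreal (2 * eta i))"
    using eta_pos by (intro prod.cong refl, subst emeasure_lborel_Ioo) (auto intro: less_imp_le)
  also have "\<dots> = ennreal (\<Prod>i\<in>J. 2 * eta i)"
    using eta_pos by (intro prod_ennreal) (auto intro: less_imp_le)
  finally have "emeasure ?P (\<Pi>\<^sub>E i\<in>J. {- eta i<..<eta i}) > 0"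
    using eta_pos by (simp add: prod_pos)
  then have Epos: "emeasure ?P E > 0"
    using emeasure_mono[OF box0 Em] by simp
  have box1: "E \<subseteq> (\<Pi>\<^sub>E i\<in>J. {- sqrt (lam i)..sqrt (lam i)})"
  proof
    fix a assume a: "a \<in> E"
    show "a \<in> (\<Pi>\<^sub>E i\<in>J. {- sqrt (lam i)..sqrt (lam i)})"
    proof (auto simp: PiE_iff)
      show ext: "a \<in> extensional J" using a unfolding E_def spP by (auto simp: PiE_iff)
      fix i assume i: "i \<in> J"
      have "(a i)\<^sup>2 / lam i \<le> (\<Sum>i\<in>J. (a i)\<^sup>2 / lam i)"
        using J i lam by (intro member_le_sum) (auto intro!: divide_nonneg_pos)
      also have "\<dots> < 1" using a unfolding E_def by auto
      finally have "(a i)\<^sup>2 < lam i" using lam[OF i] by (simp add: divide_simps)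
      then have "\<bar>a i\<bar> < sqrt (lam i)" using real_sqrt_abs real_sqrt_less_mono by fastforce
      then show "- sqrt (lam i) \<le> a i" "a i \<le> sqrt (lam i)" by auto
    qed
  qed
  have "emeasure ?P (\<Pi>\<^sub>E i\<in>J. {- sqrt (lam i)..sqrt (lam i)}) = (\<Prod>i\<in>J. emeasure lborel {- sqrt (lam i)..sqrt (lam i)})"
    using J by (intro emeasure_PiM) auto
  also have "\<dots> < \<infinity>" by (simp add: ennreal_prod_eq_top less_top[symmetric] emeasure_lborel_Icc_eq)
  finally have Efin: "emeasure ?P E < \<infinity>"
    using emeasure_mono[OF box1, of ?P] J by (auto intro: order.strict_trans1 sets_PiM_I_finite)
  obtain m where m: "emeasure ?P E = ennreal m" "m > 0"
    using Epos Efin by (cases "emeasure ?P E") (auto)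
  have "ennreal m \<le> ennreal (real (card B) * c * m)"
    using ineq m c_pos by (simp add: ennreal_mult ennreal_of_nat_eq_real_of_nat mult.assoc)
  then have "m \<le> real (card B) * c * m" using m c_pos by (simp add: ennreal_le_iff)
  then have "1 \<le> real (card B) * c" using m by simp
  then have "1 / c \<le> real (card B)" using c_pos by (simp add: divide_simps mult.commute)
  moreover have "1 / c = (\<Prod>i\<in>J. sqrt (lam i / t))"
    unfolding c_def s_def by (simp add: prod_dividef)
  ultimately show ?thesis by simp
qed



context
  fixes n \<Omega> \<nu> K \<phi> lam
  assumes S: "standing_setting n \<Omega> \<nu> K \<phi> lam"
begin

lemma ss_space: "space \<nu> = \<Omega>"
proof -
  have "sets \<nu> = sets (restrict_space borel \<Omega>)" using S by (simp add: standing_setting_def)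
  then have "space \<nu> = space (restrict_space borel \<Omega>)" by (rule sets_eq_imp_space_eq)
  then show ?thesis by (simp add: space_restrict_space)
qed

lemma ss_fin: "finite_measure \<nu>" using S by (simp add: standing_setting_def)

lemma ss_meas: "\<phi> i \<in> borel_measurable \<nu>" using S by (simp add: standing_setting_def)
lemma ss_cont: "continuous_on \<Omega> (\<phi> i)" using S by (simp add: standing_setting_def)
lemma ss_sq: "integrable \<nu> (\<lambda>x. (\<phi> i x)\<^sup>2)" using S by (simp add: standing_setting_def)
lemma ss_ortho: "(LINT x|\<nu>. \<phi> i x * \<phi> j x) = (if i = j then 1 else 0)"
  using S by (simp add: standing_setting_def)
lemma ss_lam_pos: "lam i > 0" using S by (simp add: standing_setting_def)
lemma ss_lam_mono: "i \<le> j \<Longrightarrow> lam j \<le> lam i" using S by (simp add: standing_setting_def)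
lemma ss_compact: "compact \<Omega>" using S by (simp add: standing_setting_def)

lemma ss_int_prod: "integrable \<nu> (\<lambda>x. \<phi> i x * \<phi> j x)"
proof (rule Bochner_Integration.integrable_bound)
  show "integrable \<nu> (\<lambda>x. (\<phi> i x)\<^sup>2 + (\<phi> j x)\<^sup>2)" using ss_sq by simp
  show "(\<lambda>x. \<phi> i x * \<phi> j x) \<in> borel_measurable \<nu>" using ss_meas by measurable
  show "AE x in \<nu>. norm (\<phi> i x * \<phi> j x) \<le> norm ((\<phi> i x)\<^sup>2 + (\<phi> j x)\<^sup>2)"
  proof (rule AE_I2)
    fix x
    have "2 * \<bar>\<phi> i x\<bar> * \<bar>\<phi> j x\<bar> \<le> \<bar>\<phi> i x\<bar>\<^sup>2 + \<bar>\<phi> j x\<bar>\<^sup>2"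
      using sum_squares_bound[of "\<bar>\<phi> i x\<bar>" "\<bar>\<phi> j x\<bar>"] by (simp add: power2_eq_square)
    then show "norm (\<phi> i x * \<phi> j x) \<le> norm ((\<phi> i x)\<^sup>2 + (\<phi> j x)\<^sup>2)"
    proof -
      have "0 \<le> \<bar>\<phi> i x\<bar> * \<bar>\<phi> j x\<bar>" by simp
      show ?thesis
      proof -
        have "norm (\<phi> i x * \<phi> j x) = \<bar>\<phi> i x\<bar> * \<bar>\<phi> j x\<bar>" by (simp add: abs_mult)
        moreover have "norm ((\<phi> i x)\<^sup>2 + (\<phi> j x)\<^sup>2) = \<bar>\<phi> i x\<bar>\<^sup>2 + \<bar>\<phi> j x\<bar>\<^sup>2" by simp
        ultimately show ?thesis using \<open>0 \<le> \<bar>\<phi> i x\<bar> * \<bar>\<phi> j x\<bar>\<close> \<open>2 * \<bar>\<phi> i x\<bar> * \<bar>\<phi> j x\<bar> \<le> \<bar>\<phi> i x\<bar>\<^sup>2 + \<bar>\<phi> j x\<bar>\<^sup>2\<close>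
          by linarith
      qed
    qed
  qed
qed

lemma ss_int_lincomb_sq:
  "(LINT x|\<nu>. (\<Sum>i<N. d i * \<phi> i x)\<^sup>2) = (\<Sum>i<N. (d i)\<^sup>2)"
proof -
  have eq: "(\<Sum>i<N. d i * \<phi> i x)\<^sup>2 = (\<Sum>i<N. \<Sum>j<N. d i * d j * (\<phi> i x * \<phi> j x))" for x
    by (simp add: power2_eq_square sum_product algebra_simps)
  have "(LINT x|\<nu>. (\<Sum>i<N. d i * \<phi> i x)\<^sup>2) = (\<Sum>i<N. \<Sum>j<N. d i * d j * (LINT x|\<nu>. \<phi> i x * \<phi> j x))"
    unfolding eq using ss_int_prod
    by (simp add: Bochner_Integration.integral_sum Bochner_Integration.integrable_sum)
  also have "\<dots> = (\<Sum>i<N. (d i)\<^sup>2)"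
    by (simp add: ss_ortho power2_eq_square if_distrib sum.delta cong: if_cong)
  finally show ?thesis .
qed

lemma ss_int_lincomb_sq_integrable:
  "integrable \<nu> (\<lambda>x. (\<Sum>i<N. d i * \<phi> i x)\<^sup>2)"
proof -
  have eq: "(\<Sum>i<N. d i * \<phi> i x)\<^sup>2 = (\<Sum>i<N. \<Sum>j<N. d i * d j * (\<phi> i x * \<phi> j x))" for x
    by (simp add: power2_eq_square sum_product algebra_simps)
  show ?thesis unfolding eq using ss_int_prod by (simp add: Bochner_Integration.integrable_sum)
qed

lemma ss_meas_pos: "measure \<nu> \<Omega> > 0"
proof (rule ccontr)
  assume "\<not> measure \<nu> \<Omega> > 0"
  then have "measure \<nu> (space \<nu>) = 0" using ss_space by (simp add: measure_nonneg order.antisym)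
  then have "emeasure \<nu> (space \<nu>) = 0"
    using finite_measure.emeasure_eq_measure[OF ss_fin] by simp
  then have "space \<nu> \<in> null_sets \<nu>" by (simp add: null_setsI)
  then have "AE x in \<nu>. \<phi> 0 x * \<phi> 0 x = 0" by (rule AE_I') auto
  then have "(LINT x|\<nu>. \<phi> 0 x * \<phi> 0 x) = 0" by (rule integral_eq_zero_AE)
  then show False using ss_ortho[of 0 0] by simp
qed

lemma ss_in_A:
  assumes a: "(\<Sum>i<N. (a i)\<^sup>2 / lam i) < 1"
  shows "(\<lambda>x. \<Sum>i<N. a i * \<phi> i x) \<in> proj_N \<nu> \<phi> N ` rkhs_ball \<phi> lam"
proof -
  define a' where "a' i = (if i < N then a i else 0)" for i
  let ?g = "\<lambda>x. \<Sum>i<N. a i * \<phi> i x"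
  have s1: "(\<Sum>i. (a' i)\<^sup>2 / lam i) = (\<Sum>i<N. (a i)\<^sup>2 / lam i)"
    by (subst suminf_finite[of "{..<N}"]) (auto simp: a'_def)
  have sm: "summable (\<lambda>i. (a' i)\<^sup>2 / lam i)"
    by (rule summable_finite[of "{..<N}"]) (auto simp: a'_def)
  have s2: "(\<Sum>i. a' i * \<phi> i x) = ?g x" for x
    by (subst suminf_finite[of "{..<N}"]) (auto simp: a'_def)
  have gB: "?g \<in> rkhs_ball \<phi> lam"
    unfolding rkhs_ball_def using sm s1 s2 a by (intro CollectI exI[of _ a']) auto
  have coef: "(LINT y|\<nu>. ?g y * \<phi> j y) = a j" if j: "j < N" for j
  proof -
    have "(LINT y|\<nu>. ?g y * \<phi> j y) = (LINT y|\<nu>. (\<Sum>i<N. a i * (\<phi> i y * \<phi> j y)))"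
      by (simp add: sum_distrib_right mult.assoc)
    also have "\<dots> = (\<Sum>i<N. a i * (LINT y|\<nu>. \<phi> i y * \<phi> j y))"
      using ss_int_prod by (simp add: Bochner_Integration.integral_sum)
    also have "\<dots> = a j" using j by (simp add: ss_ortho if_distrib cong: if_cong)
    finally show ?thesis .
  qed
  have "proj_N \<nu> \<phi> N ?g = ?g"
    unfolding proj_N_def by (rule ext, rule sum.cong) (auto simp: coef)
  then show ?thesis using gB by (intro image_eqI[of _ "proj_N \<nu> \<phi> N" ?g]) auto
qed

lemma ss_A_form:
  assumes "c \<in> proj_N \<nu> \<phi> N ` rkhs_ball \<phi> lam"
  shows "\<exists>b. c = (\<lambda>x. \<Sum>i<N. b i * \<phi> i x)"
  using assms unfolding proj_N_def by auto

lemma ss_sup_bound: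
  assumes lt: "(SUP x\<in>\<Omega>. \<bar>(\<Sum>i<N. a i * \<phi> i x) - (\<Sum>i<N. b i * \<phi> i x)\<bar>) < \<epsilon>"
  shows "(\<Sum>i<N. (a i - b i)\<^sup>2) < \<epsilon>\<^sup>2 * measure \<nu> \<Omega>"
proof -
  let ?h = "\<lambda>x. \<Sum>i<N. (a i - b i) * \<phi> i x"
  have heq: "(\<Sum>i<N. a i * \<phi> i x) - (\<Sum>i<N. b i * \<phi> i x) = ?h x" for x
    by (simp add: sum_subtractf left_diff_distrib)
  let ?s = "SUP x\<in>\<Omega>. \<bar>?h x\<bar>"
  have slt: "?s < \<epsilon>" using lt by (simp add: heq)
  have cont: "continuous_on \<Omega> (\<lambda>x. \<bar>?h x\<bar>)"
    using ss_cont by (intro continuous_intros) auto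
  have "compact ((\<lambda>x. \<bar>?h x\<bar>) ` \<Omega>)" by (rule compact_continuous_image[OF cont ss_compact])
  then have bdd: "bdd_above ((\<lambda>x. \<bar>?h x\<bar>) ` \<Omega>)" by (intro bounded_imp_bdd_above compact_imp_bounded)
  have le: "\<bar>?h x\<bar> \<le> ?s" if "x \<in> \<Omega>" for x using cSUP_upper[OF that bdd] by simp
  have ne: "\<Omega> \<noteq> {}" using ss_meas_pos by auto
  then obtain x0 where "x0 \<in> \<Omega>" by auto
  then have s0: "0 \<le> ?s" using le[of x0] by linarith
  interpret finite_measure \<nu> by (rule ss_fin)
  have "(\<Sum>i<N. (a i - b i)\<^sup>2) = (LINT x|\<nu>. (?h x)\<^sup>2)" by (rule ss_int_lincomb_sq[symmetric])
  also have "\<dots> \<le> (LINT x|\<nu>. ?s\<^sup>2)"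
  proof (rule integral_mono)
    show "integrable \<nu> (\<lambda>x. (?h x)\<^sup>2)" by (rule ss_int_lincomb_sq_integrable)
    show "integrable \<nu> (\<lambda>x. ?s\<^sup>2)" by simp
    fix x assume "x \<in> space \<nu>"
    then have "\<bar>?h x\<bar> \<le> ?s" using le ss_space by auto
    then show "(?h x)\<^sup>2 \<le> ?s\<^sup>2"
      using s0 abs_le_square_iff[of "?h x" ?s] by simp
  qed
  also have "\<dots> = ?s\<^sup>2 * measure \<nu> \<Omega>" using ss_space by simp
  also have "\<dots> < \<epsilon>\<^sup>2 * measure \<nu> \<Omega>"
  proof -
    have "?s\<^sup>2 < \<epsilon>\<^sup>2" by (rule power_strict_mono[OF slt s0]) simp
    then show ?thesis using ss_meas_pos by (rule mult_strict_right_mono)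
  qed
  finally show ?thesis .
qed

end


lemma ln_ge_1_minus: "x > 0 \<Longrightarrow> 1 - 1 / x \<le> ln (x::real)"
  using ln_le_minus_one[of "1/x"] by (simp add: ln_div)

lemma arith_core:
  fixes lam :: "nat \<Rightarrow> real" and N :: nat and t \<delta> D x y :: real
  assumes lp: "\<And>i. lam i > 0" and lm: "\<And>i j. i \<le> j \<Longrightarrow> lam j \<le> lam i"
    and t: "t > 0" and d: "\<delta> > 0" and D: "D > 0"
    and x: "x \<ge> 0" "x\<^sup>2 = real N * t" and y: "y \<ge> 0" "y\<^sup>2 = lam 0 * D"
    and cons: "(x + y)\<^sup>2 \<le> (\<Sum>i<N. min (lam i) \<delta>)"
  shows "eig_entropy \<delta> lam N + D \<le> (\<Sum>i\<in>{i. i < N \<and> lam i > t}. ln (lam i / t))"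
proof -
  let ?S = "\<Sum>i<N. min (lam i) \<delta>"
  have l0: "lam 0 > 0" by (rule lp)
  have "(x + y)\<^sup>2 \<ge> x\<^sup>2 + y\<^sup>2" using x y by (simp add: power2_eq_square algebra_simps)
  then have key: "?S - real N * t \<ge> lam 0 * D" using cons x y by linarith
  have Sle: "?S \<le> real N * \<delta>"
    using sum_mono[of "{..<N}" "\<lambda>i. min (lam i) \<delta>" "\<lambda>i. \<delta>"] by simp
  have "N > 0"
  proof (rule ccontr)
    assume "\<not> N > 0" then have "N = 0" by simp
    then show False using key mult_pos_pos[OF l0 D] by simp
  qed
  have "real N * t \<le> real N * \<delta>" using key Sle l0 D by (smt (verit) mult_pos_pos)
  then have td: "t \<le> \<delta>" using \<open>N > 0\<close> by simp
  have pt: "(if lam i > \<delta> then ln (lam i / \<delta>) else 0) + (min (lam i) \<delta> - t) / lam 0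
            \<le> (if lam i > t then ln (lam i / t) else 0)" for i
  proof -
    have li: "lam i \<le> lam 0" using lm[of 0 i] by simp
    show ?thesis
    proof (cases "lam i > \<delta>")
      case True
      then have "lam i > t" using td by linarith
      have "ln (lam i / t) = ln (lam i / \<delta>) + ln (\<delta> / t)"
        using t d lp[of i] by (simp add: ln_div)
      moreover have "1 - 1 / (\<delta> / t) \<le> ln (\<delta> / t)" using t d by (intro ln_ge_1_minus) simp
      moreover have "(\<delta> - t) / lam 0 \<le> 1 - 1 / (\<delta> / t)"
      proof -
        have "1 - 1 / (\<delta> / t) = (\<delta> - t) / \<delta>" using d by (simp add: field_simps)
        moreover have "(\<delta> - t) / lam 0 \<le> (\<delta> - t) / \<delta>"
          using td d True li by (intro divide_left_mono) (auto simp: mult_pos_pos)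
        ultimately show ?thesis by simp
      qed
      ultimately show ?thesis using True \<open>lam i > t\<close> by simp
    next
      case False
      show ?thesis
      proof (cases "lam i > t")
        case True
        have "1 - 1 / (lam i / t) \<le> ln (lam i / t)" using t lp[of i] by (intro ln_ge_1_minus) simp
        moreover have "1 - 1 / (lam i / t) = (lam i - t) / lam i" using lp[of i] by (simp add: field_simps)
        moreover have "(lam i - t) / lam 0 \<le> (lam i - t) / lam i"
          using True li lp[of i] by (intro divide_left_mono) (auto simp: mult_pos_pos)
        ultimately show ?thesis using False True by simp
      next
        case False2: False
        have "(lam i - t) / lam 0 \<le> 0" using False2 l0 by (simp add: divide_nonpos_pos)
        then show ?thesis using False False2 by simp
      qed
    qed
  qed
  have E: "eig_entropy \<delta> lam N = (\<Sum>i<N. if lam i > \<delta> then ln (lam i / \<delta>) else 0)"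
    unfolding eig_entropy_def
    by (subst sum.inter_filter[symmetric]) (auto intro!: sum.cong)
  have R: "(\<Sum>i\<in>{i. i < N \<and> lam i > t}. ln (lam i / t)) = (\<Sum>i<N. if lam i > t then ln (lam i / t) else 0)"
    by (subst sum.inter_filter[symmetric]) (auto intro!: sum.cong)
  have "eig_entropy \<delta> lam N + (?S - real N * t) / lam 0
      = (\<Sum>i<N. (if lam i > \<delta> then ln (lam i / \<delta>) else 0) + (min (lam i) \<delta> - t) / lam 0)"
    by (simp add: E sum.distrib sum_divide_distrib[symmetric] sum_subtractf)
  also have "\<dots> \<le> (\<Sum>i\<in>{i. i < N \<and> lam i > t}. ln (lam i / t))"
    unfolding R by (rule sum_mono) (rule pt)
  finally have 1: "eig_entropy \<delta> lam N + (?S - real N * t) / lam 0 \<le> (\<Sum>i\<in>{i. i < N \<and> lam i > t}. ln (lam i / t))" .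
  have "D \<le> (?S - real N * t) / lam 0" using key l0 by (simp add: field_simps mult.commute)
  then show ?thesis using 1 by linarith
qed



context
  fixes n \<Omega> \<nu> K \<phi> lam
  assumes S: "standing_setting n \<Omega> \<nu> K \<phi> lam"
begin

lemma ss_core:
  assumes eps: "\<epsilon> > 0" and D: "D > 0" and d: "\<delta> > 0"
    and cons: "(sqrt (measure \<nu> \<Omega>) * sqrt (real N) * \<epsilon> + sqrt (lam 0) * sqrt D)\<^sup>2 \<le> (\<Sum>i<N. min (lam i) \<delta>)"
    and C: "finite C" and cov: "sup_cover \<Omega> \<epsilon> (proj_N \<nu> \<phi> N ` rkhs_ball \<phi> lam) C"
  shows "eig_entropy \<delta> lam N / 2 - 1 / 2 * ln (1 / D) \<le> ln (real (card C))"
proof -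
  let ?A = "proj_N \<nu> \<phi> N ` rkhs_ball \<phi> lam"
  define t where "t = \<epsilon>\<^sup>2 * measure \<nu> \<Omega>"
  have t: "t > 0" unfolding t_def using eps ss_meas_pos[OF S] by simp
  have CA: "C \<subseteq> ?A" and AC: "?A \<subseteq> (\<Union>c\<in>C. {f. (SUP x\<in>\<Omega>. \<bar>f x - c x\<bar>) < \<epsilon>})"
    using cov unfolding sup_cover_def by auto
  define bc where "bc c = (SOME b. c = (\<lambda>x. \<Sum>i<N. b i * \<phi> i x))" for c :: "(nat \<Rightarrow> real) \<Rightarrow> real"
  have bc: "c = (\<lambda>x. \<Sum>i<N. bc c i * \<phi> i x)" if "c \<in> C" for c
  proof -
    have "\<exists>b. c = (\<lambda>x. \<Sum>i<N. b i * \<phi> i x)" using ss_A_form[OF S] CA that by blast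
    then show ?thesis unfolding bc_def by (rule someI_ex)
  qed
  define J where "J = {i. i < N \<and> lam i > t}"
  have JN: "J \<subseteq> {..<N}" unfolding J_def by auto
  have Jfin: "finite J" using JN finite_subset by blast
  have covE: "\<exists>b\<in>bc ` C. (\<Sum>i\<in>J. (a i - b i)\<^sup>2) < t"
    if "a \<in> (\<Pi>\<^sub>E i\<in>J. UNIV)" "(\<Sum>i\<in>J. (a i)\<^sup>2 / lam i) < 1" for a
  proof -
    define a' where "a' i = (if i \<in> J then a i else 0)" for i
    have "(\<Sum>i<N. (a' i)\<^sup>2 / lam i) = (\<Sum>i<N. if i \<in> J then (a i)\<^sup>2 / lam i else 0)"
      by (intro sum.cong) (auto simp: a'_def)
    also have "\<dots> = (\<Sum>i\<in>{..<N} \<inter> J. (a i)\<^sup>2 / lam i)" by (rule sum.inter_restrict[symmetric]) simp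
    also have "{..<N} \<inter> J = J" using JN by auto
    finally have "(\<Sum>i<N. (a' i)\<^sup>2 / lam i) < 1" using that(2) by simp
    then have gA: "(\<lambda>x. \<Sum>i<N. a' i * \<phi> i x) \<in> ?A" by (rule ss_in_A[OF S])
    then obtain c where c: "c \<in> C" "(SUP x\<in>\<Omega>. \<bar>(\<Sum>i<N. a' i * \<phi> i x) - c x\<bar>) < \<epsilon>"
      using AC by blast
    then have "(SUP x\<in>\<Omega>. \<bar>(\<Sum>i<N. a' i * \<phi> i x) - (\<Sum>i<N. bc c i * \<phi> i x)\<bar>) < \<epsilon>"
      using bc[OF c(1)] by metis
    then have lt: "(\<Sum>i<N. (a' i - bc c i)\<^sup>2) < t"
      unfolding t_def by (rule ss_sup_bound[OF S])
    have "(\<Sum>i\<in>J. (a i - bc c i)\<^sup>2) = (\<Sum>i\<in>J. (a' i - bc c i)\<^sup>2)"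
      by (intro sum.cong) (auto simp: a'_def)
    also have "\<dots> \<le> (\<Sum>i<N. (a' i - bc c i)\<^sup>2)"
      by (rule sum_mono2[OF _ JN]) auto
    finally show ?thesis using lt c(1) by force
  qed
  have lamJ: "\<And>i. i \<in> J \<Longrightarrow> lam i > 0" using ss_lam_pos[OF S] by blast
  have "(\<Prod>i\<in>J. sqrt (lam i / t)) \<le> real (card (bc ` C))"
    by (rule ellipsoid_cover[OF Jfin lamJ t finite_imageI[OF C] covE])
  also have "\<dots> \<le> real (card C)" using card_image_le[OF C] by simp
  finally have pc: "(\<Prod>i\<in>J. sqrt (lam i / t)) \<le> real (card C)" .
  have ppos: "(\<Prod>i\<in>J. sqrt (lam i / t)) > 0" using lamJ t by (intro prod_pos) simp
  have "ln (\<Prod>i\<in>J. sqrt (lam i / t)) = (\<Sum>i\<in>J. ln (lam i / t) / 2)"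
  proof -
    have "\<And>i. i \<in> J \<Longrightarrow> ln (sqrt (lam i / t)) = ln (lam i / t) / 2"
      using lamJ t by (intro ln_sqrt) (simp add: less_imp_le)
    moreover have "\<And>i. i \<in> J \<Longrightarrow> sqrt (lam i / t) > 0" using lamJ t by (simp add: divide_pos_pos)
    ultimately show ?thesis using Jfin lamJ by (subst ln_prod) (auto intro!: sum.cong dest: lamJ)
  qed
  also have "\<dots> = (\<Sum>i\<in>J. ln (lam i / t)) / 2" by (simp add: sum_divide_distrib)
  finally have lnp: "(\<Sum>i\<in>J. ln (lam i / t)) / 2 \<le> ln (real (card C))"
    using pc ppos by (metis ln_le_cancel_iff order.strict_trans2)
  have ar: "eig_entropy \<delta> lam N + D \<le> (\<Sum>i\<in>J. ln (lam i / t))"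
    unfolding J_def
  proof (rule arith_core[where x = "sqrt (measure \<nu> \<Omega>) * sqrt (real N) * \<epsilon>" and y = "sqrt (lam 0) * sqrt D"])
    show "\<And>i. 0 < lam i" by (rule ss_lam_pos[OF S])
    show "\<And>i j. i \<le> j \<Longrightarrow> lam j \<le> lam i" by (rule ss_lam_mono[OF S])
    show "0 < t" "0 < \<delta>" "0 < D" by fact+
    show "0 \<le> sqrt (measure \<nu> \<Omega>) * sqrt (real N) * \<epsilon>" using eps by simp
    show "(sqrt (measure \<nu> \<Omega>) * sqrt (real N) * \<epsilon>)\<^sup>2 = real N * t"
      unfolding t_def by (simp add: power_mult_distrib)
    show "0 \<le> sqrt (lam 0) * sqrt D" using D ss_lam_pos[OF S, of 0] by (intro mult_nonneg_nonneg) auto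
    show "(sqrt (lam 0) * sqrt D)\<^sup>2 = lam 0 * D"
      using D ss_lam_pos[OF S, of 0] by (simp add: power_mult_distrib)
    show "(sqrt (measure \<nu> \<Omega>) * sqrt (real N) * \<epsilon> + sqrt (lam 0) * sqrt D)\<^sup>2 \<le> (\<Sum>i<N. min (lam i) \<delta>)"
      by (rule cons)
  qed
  have "ln D \<le> D - 1" using D by (rule ln_le_minus_one)
  moreover have "ln (1 / D) = - ln D" using D by (simp add: ln_div)
  ultimately show ?thesis using ar lnp by linarith
qed

end

theorem lemma14:
  shows "\<exists>C>0. \<forall>n \<Omega> \<nu> K \<phi> lam. standing_setting n \<Omega> \<nu> K \<phi> lam \<longrightarrow>
    (\<forall>(N::nat) (\<epsilon>::real). \<epsilon> > 0 \<longrightarrow>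
      (SUP p\<in>{(D::real, \<delta>::real). D > 0 \<and> \<delta> > 0 \<and>
              (sqrt (measure \<nu> \<Omega>) * sqrt (real N) * \<epsilon> + sqrt (lam 0) * sqrt D)\<^sup>2
                \<le> (\<Sum>i<N. min (lam i) \<delta>)}.
         ereal (eig_entropy (snd p) lam N / 2 - C * ln (1 / fst p)))
      \<le> int_entropy \<epsilon> (proj_N \<nu> \<phi> N ` rkhs_ball \<phi> lam) \<Omega>)"
proof (intro exI[of _ "1/2"] conjI allI impI)
  fix n \<Omega> \<nu> K \<phi> lam N and \<epsilon> :: real
  assume S: "standing_setting n \<Omega> \<nu> K \<phi> lam" and eps: "\<epsilon> > 0"
  let ?A = "proj_N \<nu> \<phi> N ` rkhs_ball \<phi> lam"
  show "(SUP p\<in>{(D::real, \<delta>::real). D > 0 \<and> \<delta> > 0 \<and>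
              (sqrt (measure \<nu> \<Omega>) * sqrt (real N) * \<epsilon> + sqrt (lam 0) * sqrt D)\<^sup>2
                \<le> (\<Sum>i<N. min (lam i) \<delta>)}.
         ereal (eig_entropy (snd p) lam N / 2 - 1 / 2 * ln (1 / fst p)))
      \<le> int_entropy \<epsilon> ?A \<Omega>"
  proof (rule SUP_least)
    fix p assume p: "p \<in> {(D::real, \<delta>::real). D > 0 \<and> \<delta> > 0 \<and>
              (sqrt (measure \<nu> \<Omega>) * sqrt (real N) * \<epsilon> + sqrt (lam 0) * sqrt D)\<^sup>2
                \<le> (\<Sum>i<N. min (lam i) \<delta>)}"
    obtain D \<delta> where pD: "p = (D, \<delta>)" by (cases p)
    with p have D: "D > 0" and d: "\<delta> > 0" and cons: "(sqrt (measure \<nu> \<Omega>) * sqrt (real N) * \<epsilon> + sqrt (lam 0) * sqrt D)\<^sup>2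
                \<le> (\<Sum>i<N. min (lam i) \<delta>)" by auto
    show "ereal (eig_entropy (snd p) lam N / 2 - 1 / 2 * ln (1 / fst p)) \<le> int_entropy \<epsilon> ?A \<Omega>"
    proof (cases "\<exists>C. finite C \<and> sup_cover \<Omega> \<epsilon> ?A C")
      case False
      then have "int_entropy \<epsilon> ?A \<Omega> = \<infinity>" unfolding int_entropy_def by (simp only: if_not_P[OF False] if_False)
      then show ?thesis by simp
    next
      case True
      then obtain C0 where "finite C0 \<and> sup_cover \<Omega> \<epsilon> ?A C0" by blast
      then have ex: "\<exists>m. \<exists>C. finite C \<and> sup_cover \<Omega> \<epsilon> ?A C \<and> card C = m" by blast
      from LeastI_ex[OF ex] obtain C where C: "finite C" "sup_cover \<Omega> \<epsilon> ?A C"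
        "card C = (LEAST m. \<exists>C. finite C \<and> sup_cover \<Omega> \<epsilon> ?A C \<and> card C = m)" by blast
      have "eig_entropy \<delta> lam N / 2 - 1 / 2 * ln (1 / D) \<le> ln (real (card C))"
        by (rule ss_core[OF S eps D d cons C(1) C(2)])
      then show ?thesis using True C(3) pD unfolding int_entropy_def by simp
    qed
  qed
qed (simp)


end
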